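(* Let $\varepsilon>0$ be a constant and let $c_0>0$ be a sufficiently large constant (depending on $\varepsilon$). If $c_0/n\leq p\leq\ln(n)^7/n$, then with probability at least $9/10$ the random graph $G(n,p)$ has at most $1/p$ vertices of degree greater than $(1+\varepsilon)np$.
   Context: $G(n,p)$ is the random graph on $\{1,\dots,n\}$ with each possible edge present independently with probability $p$. *)

theory Defs
  imports "HOL-Probability.Probability"
begin

definition gnp_pairs :: "nat \<Rightarrow> (nat \<times> nat) set" where
  "gnp_pairs n = {(u, v). 1 \<le> u \<and> u < v \<and> v \<le> n}"

text \<open>The random graph G(n,p): each potential edge present independently with probability p.
  A graph is represented by its edge indicator on ordered pairs (u,v) with u < v.\<close>
definition gnp :: "nat \<Rightarrow> real \<Rightarrow> ((nat \<times> nat) \<Rightarrow> bool) pmf" where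
  "gnp n p = Pi_pmf (gnp_pairs n) False (\<lambda>_. bernoulli_pmf p)"

definition adj :: "((nat \<times> nat) \<Rightarrow> bool) \<Rightarrow> nat \<Rightarrow> nat \<Rightarrow> bool" where
  "adj G u v = (u \<noteq> v \<and> G (min u v, max u v))"

definition degree :: "nat \<Rightarrow> ((nat \<times> nat) \<Rightarrow> bool) \<Rightarrow> nat \<Rightarrow> nat" where
  "degree n G v = card {u \<in> {1..n}. adj G u v}"

end

theory Submission imports Defs begin
lemma binom_chernoff:
  fixes m :: nat and p t a :: real
  assumes p: "0 \<le> p" "p \<le> 1" and t: "t \<ge> 0"
  shows "measure_pmf.prob (binomial_pmf m p) {k. real k > a} \<le> exp (- t * a + real m * p * (exp t - 1))"
proof -
  have pp: "p \<in> {0..1}" using p by auto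
  have "measure_pmf.prob (binomial_pmf m p) {k. real k > a}
      = (\<integral>k. indicator {k. real k > a} k \<partial>measure_pmf (binomial_pmf m p))" by simp
  also have "\<dots> = (\<Sum>k\<in>{..m}. indicator {k. real k > a} k * pmf (binomial_pmf m p) k)"
    using pp by (intro integral_measure_pmf_real) (auto simp: set_pmf_binomial_eq split: if_splits)
  also have "\<dots> \<le> (\<Sum>k\<in>{..m}. exp (t * (real k - a)) * pmf (binomial_pmf m p) k)"
  proof (intro sum_mono mult_right_mono)
    fix k assume "k \<in> {..m}"
    show "indicator {k. real k > a} k \<le> exp (t * (real k - a))"
    proof (cases "real k > a")
      case True
      then have "0 \<le> t * (real k - a)" using t by simp
      then show ?thesis using True by (simp add: one_le_exp_iff)
    qed simp
  qed simp
  also have "\<dots> = exp (- t * a) * (\<Sum>k\<in>{..m}. real (m choose k) * (p * exp t) ^ k * (1 - p) ^ (m - k))"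
    using pp by (simp add: sum_distrib_left pmf_binomial exp_diff exp_of_nat_mult[symmetric] algebra_simps power_mult_distrib
       right_diff_distrib exp_minus field_simps)
  also have "(\<Sum>k\<in>{..m}. real (m choose k) * (p * exp t) ^ k * (1 - p) ^ (m - k)) = (p * exp t + (1 - p)) ^ m"
    by (subst binomial_ring) (simp add: atMost_atLeast0 mult_ac)
  also have "\<dots> = (1 + p * (exp t - 1)) ^ m" by (simp add: algebra_simps)
  also have "\<dots> \<le> exp (p * (exp t - 1)) ^ m"
    using p t by (intro power_mono) (auto simp: mult_nonneg_nonneg)
  also have "\<dots> = exp (real m * p * (exp t - 1))"
    by (simp add: exp_of_nat_mult[symmetric] mult_ac)
  finally show ?thesis by (simp add: exp_add[symmetric] mult_left_mono)
qed

lemma degree_binomial: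
  assumes v: "v \<in> {1..n}" and p: "0 \<le> p" "p \<le> 1"
  shows "map_pmf (\<lambda>G. degree n G v) (gnp n p) = binomial_pmf (n - 1) p"
proof -
  define A where "A = {e \<in> gnp_pairs n. fst e = v \<or> snd e = v}"
  define h where "h = (\<lambda>u::nat. (min u v, max u v))"
  have fin: "finite (gnp_pairs n)"
    by (rule finite_subset[of _ "{1..n} \<times> {1..n}"]) (auto simp: gnp_pairs_def)
  have AP: "A \<subseteq> gnp_pairs n" by (auto simp: A_def)
  have finA: "finite A" using fin AP finite_subset by blast
  have inj: "inj_on h ({1..n} - {v})"
    by (auto simp: inj_on_def h_def min_def max_def split: if_splits)
  have imgA: "h ` ({1..n} - {v}) = A"
  proof
    show "h ` ({1..n} - {v}) \<subseteq> A" using v by (auto simp: h_def A_def gnp_pairs_def min_def max_def)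
  next
    show "A \<subseteq> h ` ({1..n} - {v})"
    proof
      fix e assume "e \<in> A"
      then obtain x y where e: "e = (x, y)" "1 \<le> x" "x < y" "y \<le> n" "x = v \<or> y = v"
        by (auto simp: A_def gnp_pairs_def)
      show "e \<in> h ` ({1..n} - {v})"
      proof (cases "x = v")
        case True
        then show ?thesis using e by (intro image_eqI[of _ _ y]) (auto simp: h_def)
      next
        case False
        then show ?thesis using e by (intro image_eqI[of _ _ x]) (auto simp: h_def)
      qed
    qed
  qed
  have cardA: "card A = n - 1"
    using card_image[OF inj] imgA v by simp
  have deg: "degree n G v = card {e \<in> A. G e}" for G
  proof -
    have "{e \<in> A. G e} = h ` {u \<in> {1..n}. adj G u v}"
      unfolding imgA[symmetric] by (auto simp: adj_def h_def)
    moreover have "inj_on h {u \<in> {1..n}. adj G u v}"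
      by (rule inj_on_subset[OF inj]) (auto simp: adj_def)
    ultimately show ?thesis unfolding degree_def by (simp add: card_image)
  qed
  have "map_pmf (\<lambda>G. degree n G v) (gnp n p)
      = map_pmf (\<lambda>G. card {e \<in> A. G e}) (map_pmf (\<lambda>f x. if x \<in> A then f x else False) (gnp n p))"
    by (simp add: map_pmf_comp deg) (intro map_pmf_cong refl arg_cong[where f=card], auto)
  also have "map_pmf (\<lambda>f x. if x \<in> A then f x else False) (gnp n p) = Pi_pmf A False (\<lambda>_. bernoulli_pmf p)"
    unfolding gnp_def by (rule Pi_pmf_subset[symmetric]) (use fin AP in auto)
  also have "map_pmf (\<lambda>G. card {e \<in> A. G e}) \<dots> = binomial_pmf (n - 1) p"
    by (rule binomial_pmf_altdef'[symmetric]) (use finA cardA p in auto)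
  finally show ?thesis .
qed

lemma gnp_finite: "finite (set_pmf (gnp n p))"
proof -
  have fin: "finite (gnp_pairs n)"
    by (rule finite_subset[of _ "{1..n} \<times> {1..n}"]) (auto simp: gnp_pairs_def)
  show ?thesis unfolding gnp_def
    by (rule finite_subset[OF set_Pi_pmf_subset'[OF fin]]) (intro finite_PiE_dflt fin, simp)
qed

lemma markov_part:
  fixes n :: nat and p a q :: real
  assumes p: "0 < p"
    and hq: "\<And>v. v \<in> {1..n} \<Longrightarrow> measure_pmf.prob (gnp n p) {G. real (degree n G v) > a} \<le> q"
  shows "measure_pmf.prob (gnp n p) {G. real (card {v \<in> {1..n}. real (degree n G v) > a}) \<le> 1 / p}
         \<ge> 1 - p * (real n * q)"
proof -
  let ?M = "measure_pmf (gnp n p)"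
  define X where "X = (\<lambda>G. real (card {v \<in> {1..n}. real (degree n G v) > a}))"
  have Xs: "X G = (\<Sum>v\<in>{1..n}. indicator {G. real (degree n G v) > a} G)" for G
  proof -
    have "(\<Sum>v\<in>{1..n}. indicator {G. real (degree n G v) > a} G :: real)
        = (\<Sum>v\<in>{v \<in> {1..n}. real (degree n G v) > a}. 1)"
      by (rule sum.mono_neutral_cong_right) (auto simp: indicator_def)
    then show ?thesis by (simp add: X_def)
  qed
  have int: "integrable ?M f" for f :: "_ \<Rightarrow> real"
    by (rule integrable_measure_pmf_finite[OF gnp_finite])
  have EX: "(\<integral>G. X G \<partial>?M) = (\<Sum>v\<in>{1..n}. measure_pmf.prob (gnp n p) {G. real (degree n G v) > a})"
    unfolding Xs by (subst Bochner_Integration.integral_sum) (auto intro: int)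
  have EXle: "(\<integral>G. X G \<partial>?M) \<le> real n * q"
    unfolding EX using sum_mono[of "{1..n}" _ "\<lambda>_. q", OF hq] by simp
  have mk: "measure ?M {G \<in> space ?M. X G \<ge> 1 / p} \<le> (\<integral>G. X G \<partial>?M) / (1 / p)"
    by (rule integral_Markov_inequality_measure[where A = UNIV]) (use p int in \<open>auto simp: X_def\<close>)
  have "measure ?M {G. X G > 1 / p} \<le> measure ?M {G \<in> space ?M. X G \<ge> 1 / p}"
    by (intro measure_pmf.finite_measure_mono) auto
  also note mk
  also have "(\<integral>G. X G \<partial>?M) / (1 / p) = p * (\<integral>G. X G \<partial>?M)" by simp
  also have "\<dots> \<le> p * (real n * q)" using EXle p by (intro mult_left_mono) auto
  finally have bad: "measure ?M {G. X G > 1 / p} \<le> p * (real n * q)" .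
  have "{G. X G \<le> 1 / p} = space ?M - {G. X G > 1 / p}" by auto
  then have "measure ?M {G. X G \<le> 1 / p} = 1 - measure ?M {G. X G > 1 / p}"
    using measure_pmf.prob_compl[of "{G. X G > 1 / p}" "gnp n p"] by simp
  with bad show ?thesis unfolding X_def by simp
qed

lemma x_exp_bound:
  fixes d x :: real
  assumes d: "d > 0" and x: "x \<ge> 20 / d^2"
  shows "x * exp (- d * x) \<le> 1 / 10"
proof -
  have xpos: "x > 0" using x d by (smt (verit) divide_pos_pos zero_less_power)
  have "1 + d * x + (d * x)^2 / 2 \<le> exp (d * x)"
    using d xpos by (intro exp_lower_Taylor_quadratic) simp
  then have e: "(d * x)^2 / 2 \<le> exp (d * x)" using d xpos by (smt (verit) mult_pos_pos)
  have "x * exp (- d * x) = x / exp (d * x)" by (simp add: exp_minus field_simps)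
  also have "\<dots> \<le> x / ((d * x)^2 / 2)"
    using e d xpos by (intro divide_left_mono) (auto simp: mult_pos_pos)
  also have "\<dots> = 2 / (d^2 * x)" using xpos d by (simp add: field_simps power2_eq_square)
  also have "\<dots> \<le> 1 / 10"
  proof -
    have "20 \<le> d^2 * x" using x d by (simp add: field_simps)
    then show ?thesis by (simp add: field_simps)
  qed
  finally show ?thesis .
qed

theorem lemma11:
  fixes \<epsilon> :: real
  assumes "\<epsilon> > 0"
  shows "\<exists>c0 > 0. \<forall>(n::nat) (p::real).
           c0 / real n \<le> p \<and> p \<le> ln (real n) ^ 7 / real n \<and> p \<le> 1 \<longrightarrow>
           measure_pmf.prob (gnp n p)
             {G. real (card {v \<in> {1..n}. real (degree n G v) > (1 + \<epsilon>) * real n * p}) \<le> 1 / p}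
           \<ge> 9 / 10"
proof -
  define d where "d = (1 + \<epsilon>) * ln (1 + \<epsilon>) - \<epsilon>"
  have "ln (\<epsilon> + 1) > \<epsilon> / (1 + \<epsilon>)" using assms by (rule ln_add1_gt)
  then have dpos: "d > 0" using assms by (simp add: d_def field_simps add.commute)
  define c0 where "c0 = 20 / d^2"
  have c0pos: "c0 > 0" using dpos by (simp add: c0_def)
  show ?thesis
  proof (intro exI[of _ c0] conjI c0pos allI impI)
    fix n :: nat and p :: real
    assume h: "c0 / real n \<le> p \<and> p \<le> ln (real n) ^ 7 / real n \<and> p \<le> 1"
    show "measure_pmf.prob (gnp n p)
             {G. real (card {v \<in> {1..n}. real (degree n G v) > (1 + \<epsilon>) * real n * p}) \<le> 1 / p}
           \<ge> 9 / 10"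
    proof (cases "n = 0")
      case True
      then have "p = 0" using h by simp
      then show ?thesis using True by simp
    next
      case False
      then have npos: "real n > 0" by simp
      have xge: "real n * p \<ge> c0" using h npos by (simp add: field_simps)
      then have ppos: "p > 0" using c0pos npos by (smt (verit) zero_less_mult_iff)
      define a where "a = (1 + \<epsilon>) * real n * p"
      define t where "t = ln (1 + \<epsilon>)"
      have t0: "t \<ge> 0" using assms by (simp add: t_def)
      have et: "exp t = 1 + \<epsilon>" using assms by (simp add: t_def)
      have hq: "measure_pmf.prob (gnp n p) {G. real (degree n G v) > a} \<le> exp (- d * (real n * p))"
        if v: "v \<in> {1..n}" for v
      proof -
        have "measure_pmf.prob (gnp n p) {G. real (degree n G v) > a}
            = measure_pmf.prob (map_pmf (\<lambda>G. degree n G v) (gnp n p)) {k. real k > a}"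
          by simp
        also have "\<dots> = measure_pmf.prob (binomial_pmf (n - 1) p) {k. real k > a}"
          using degree_binomial[OF v, of p] ppos h by simp
        also have "\<dots> \<le> exp (- t * a + real (n - 1) * p * (exp t - 1))"
          using ppos h t0 by (intro binom_chernoff) auto
        also have "\<dots> \<le> exp (- d * (real n * p))"
        proof -
          have "real (n - 1) \<le> real n" by simp
          then have "real (n - 1) * p * \<epsilon> \<le> real n * p * \<epsilon>"
            using ppos assms by (intro mult_right_mono) auto
          moreover have dd: "d = (1 + \<epsilon>) * t - \<epsilon>" by (simp add: d_def t_def)
          ultimately show ?thesis unfolding et a_def dd by (simp add: algebra_simps)
        qed
        finally show ?thesis .
      qed
      have "measure_pmf.prob (gnp n p)
             {G. real (card {v \<in> {1..n}. real (degree n G v) > a}) \<le> 1 / p}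
           \<ge> 1 - p * (real n * exp (- d * (real n * p)))"
        by (rule markov_part[OF ppos hq])
      moreover have "p * (real n * exp (- d * (real n * p))) \<le> 1 / 10"
        using x_exp_bound[OF dpos, of "real n * p"] xge by (simp add: c0_def mult_ac)
      ultimately show ?thesis unfolding a_def by simp
    qed
  qed
qed

end
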